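(* Let $\Omega>0$, $\lambda>1/\pi$ with $\lambda\neq2\Omega$, and let $w^\lambda$ be a maximizer of $\mathcal{E}$ over $K_\lambda(D)$ with associated number $\mu^\lambda$ such that $w^\lambda=\lambda I_{A^\lambda}+2\Omega I_{B^\lambda}$ a.e., where $A^\lambda=\{x\in D:Gw^\lambda(x)+\frac{\Omega}{2}|x|^2>\mu^\lambda\}$, $B^\lambda=\{x\in D:Gw^\lambda(x)+\frac{\Omega}{2}|x|^2=\mu^\lambda\}$, and $\mu^\lambda=\operatorname{ess\,sup}_{\{w^\lambda<\lambda\}}(Gw^\lambda+\frac{\Omega}{2}|x|^2)$. Then $|B^\lambda|=0$.
   Context: $D$ is the open unit disk in $\mathbb{R}^2$; $G$ is the Green's function of $-\Delta$ in $D$ with zero Dirichlet boundary condition and $Gw(x)=\int_D G(x,y)w(y)dy$. $I_A$ is the indicator of $A$ and $|\cdot|$ is Lebesgue measure. $K_\lambda(D)=\{w\in L^\infty(D):0\le w\le\lambda\text{ a.e.},\ \int_D w=1\}$, $\mathcal{E}(w)=\frac12\int_D\int_D G(x,y)w(x)w(y)dxdy+\frac{\Omega}{2}\int_D|x|^2w(x)dx$; a maximizer is $w^\lambda\in K_\lambda(D)$ with $\mathcal{E}(w^\lambda)=\sup_{K_\lambda(D)}\mathcal{E}$. *)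

theory Defs
  imports "HOL-Analysis.Analysis" "HOL-Probability.Essential_Supremum"
begin

type_synonym pt = "real ^ 2"

definition Disk :: "pt set" where
  "Disk = ball 0 1"

text \<open>Green's function of -Laplacian on the unit disk, zero Dirichlet data:
  G(x,y) = (1/(4 pi)) ln((1 - 2 x.y + |x|^2 |y|^2) / |x - y|^2),
  equivalently -(1/2pi) ln|x-y| + (1/2pi) ln(|y| |x - y/|y|^2|).\<close>
definition GreenD :: "pt \<Rightarrow> pt \<Rightarrow> real" where
  "GreenD x y = (1 / (4 * pi)) *
     ln ((1 - 2 * (x \<bullet> y) + (norm x)\<^sup>2 * (norm y)\<^sup>2) / (norm (x - y))\<^sup>2)"

definition Gop :: "(pt \<Rightarrow> real) \<Rightarrow> pt \<Rightarrow> real" where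
  "Gop w x = (\<integral>y\<in>Disk. GreenD x y * w y \<partial>lebesgue)"

definition Klam :: "real \<Rightarrow> (pt \<Rightarrow> real) set" where
  "Klam lam = {w. w \<in> borel_measurable lebesgue \<and>
     (AE x in lebesgue. x \<in> Disk \<longrightarrow> 0 \<le> w x \<and> w x \<le> lam) \<and>
     set_integrable lebesgue Disk w \<and> (\<integral>x\<in>Disk. w x \<partial>lebesgue) = 1}"

definition Energy :: "real \<Rightarrow> (pt \<Rightarrow> real) \<Rightarrow> real" where
  "Energy Om w = (1/2) * (\<integral>x\<in>Disk. (\<integral>y\<in>Disk. GreenD x y * w x * w y \<partial>lebesgue) \<partial>lebesgue)
      + (Om / 2) * (\<integral>x\<in>Disk. (norm x)\<^sup>2 * w x \<partial>lebesgue)"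

end

theory Submission
  imports Defs
begin


lemma key_id: "1 - 2 * (x \<bullet> y) + (norm x)\<^sup>2 * (norm y)\<^sup>2 = (norm (x - y))\<^sup>2 + (1 - (norm x)\<^sup>2) * (1 - (norm (y::pt))\<^sup>2)"
  by (simp add: power2_norm_eq_inner inner_diff algebra_simps inner_commute)

lemma N_upper: "norm x < 1 \<Longrightarrow> norm y < 1 \<Longrightarrow> 1 - 2 * (x \<bullet> y) + (norm x)\<^sup>2 * (norm (y::pt))\<^sup>2 \<le> 4"
proof -
  assume a: "norm x < 1" "norm y < 1"
  have "- (x \<bullet> y) \<le> norm x * norm y" using Cauchy_Schwarz_ineq2[of x y] by (simp add: abs_le_iff)
  moreover have "norm x * norm y \<le> 1" using a by (simp add: mult_le_one)
  moreover have "(norm x)\<^sup>2 * (norm y)\<^sup>2 \<le> 1" using a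
    by (metis abs_norm_cancel less_eq_real_def mult_le_one one_power2 power2_le_iff_abs_le zero_le_power2)
  ultimately show ?thesis by linarith
qed

lemma G_nonneg: assumes "norm x < 1" "norm (y::pt) < 1" shows "0 \<le> GreenD x y"
proof (cases "x = y")
  case True then show ?thesis by (simp add: GreenD_def)
next
  case False
  have d: "(norm (x - y))\<^sup>2 > 0" using False by simp
  have "(1 - (norm x)\<^sup>2) * (1 - (norm y)\<^sup>2) \<ge> 0" using assms
    by (intro mult_nonneg_nonneg) (simp_all add: abs_square_le_1)
  hence N: "(norm (x - y))\<^sup>2 \<le> 1 - 2 * (x \<bullet> y) + (norm x)\<^sup>2 * (norm y)\<^sup>2"
    unfolding key_id by linarith
  hence "1 \<le> (1 - 2 * (x \<bullet> y) + (norm x)\<^sup>2 * (norm y)\<^sup>2) / (norm (x - y))\<^sup>2"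
    using d by (simp add: le_divide_eq)
  thus ?thesis by (simp add: GreenD_def)
qed

lemma G_upper: assumes "norm x < 1" "norm (y::pt) < 1" "x \<noteq> y"
  shows "GreenD x y \<le> (1 / (4 * pi)) * ln (4 / (norm (x - y))\<^sup>2)"
proof -
  have d: "(norm (x - y))\<^sup>2 > 0" using assms by simp
  have "(1 - (norm x)\<^sup>2) * (1 - (norm y)\<^sup>2) \<ge> 0" using assms
    by (intro mult_nonneg_nonneg) (simp_all add: abs_square_le_1)
  hence p: "0 < (1 - 2 * (x \<bullet> y) + (norm x)\<^sup>2 * (norm y)\<^sup>2)" using d unfolding key_id by linarith
  have "ln ((1 - 2 * (x \<bullet> y) + (norm x)\<^sup>2 * (norm y)\<^sup>2) / (norm (x - y))\<^sup>2) \<le> ln (4 / (norm (x - y))\<^sup>2)"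
    using p d N_upper[OF assms(1,2)] by (simp add: divide_right_mono)
  thus ?thesis unfolding GreenD_def by (simp add: divide_right_mono)
qed

lemma G_lower: assumes "norm x \<le> \<rho>" "norm (y::pt) \<le> \<rho>" "\<rho> < 1" "x \<noteq> y"
  shows "(1 / (4 * pi)) * ln ((1 - \<rho>\<^sup>2)\<^sup>2 / (norm (x - y))\<^sup>2) \<le> GreenD x y"
proof -
  have d: "(norm (x - y))\<^sup>2 > 0" using assms by simp
  have r0: "0 \<le> \<rho>" using assms(1) norm_ge_zero order_trans by blast
  have a: "(norm x)\<^sup>2 \<le> \<rho>\<^sup>2" "(norm y)\<^sup>2 \<le> \<rho>\<^sup>2" using assms r0 by (simp_all add: power_mono)
  have r1: "\<rho>\<^sup>2 < 1" using assms r0 by (simp add: abs_square_less_1)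
  have "(1 - \<rho>\<^sup>2)\<^sup>2 \<le> (1 - (norm x)\<^sup>2) * (1 - (norm y)\<^sup>2)"
    unfolding power2_eq_square[of "1 - \<rho>\<^sup>2"] using a r1 by (intro mult_mono) auto
  hence N: "(1 - \<rho>\<^sup>2)\<^sup>2 \<le> 1 - 2 * (x \<bullet> y) + (norm x)\<^sup>2 * (norm y)\<^sup>2" unfolding key_id using d by linarith
  have p: "0 < (1 - \<rho>\<^sup>2)\<^sup>2" using r1 by simp
  have "ln ((1 - \<rho>\<^sup>2)\<^sup>2 / (norm (x - y))\<^sup>2) \<le> ln ((1 - 2 * (x \<bullet> y) + (norm x)\<^sup>2 * (norm y)\<^sup>2) / (norm (x - y))\<^sup>2)"
    using p d N by (intro ln_mono divide_right_mono divide_pos_pos) auto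
  thus ?thesis unfolding GreenD_def by (simp add: divide_right_mono)
qed

lemma G_meas_borel: "(\<lambda>(x,y). GreenD x y) \<in> borel_measurable (borel \<Otimes>\<^sub>M (borel :: pt measure))"
  unfolding GreenD_def by measurable

lemma G_meas: "(\<lambda>(x,y). GreenD x y) \<in> borel_measurable (lebesgue \<Otimes>\<^sub>M (lebesgue :: pt measure))"
proof -
  have "(\<lambda>p. p) \<in> (lebesgue \<Otimes>\<^sub>M (lebesgue :: pt measure)) \<rightarrow>\<^sub>M (borel \<Otimes>\<^sub>M borel)"
    by (rule measurable_pair_measureI) (auto intro: measurable_completion simp: space_pair_measure)
  from measurable_comp[OF this G_meas_borel] show ?thesis by (simp add: o_def)
qed

lemma borel_to_leb: "(f :: pt \<Rightarrow> real) \<in> borel_measurable borel \<Longrightarrow> f \<in> borel_measurable lebesgue"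
proof -
  assume "f \<in> borel_measurable borel"
  hence "f \<in> lborel \<rightarrow>\<^sub>M borel" by (simp only: measurable_lborel2)
  thus ?thesis by (rule measurable_completion)
qed



lemma Disk_sets[measurable]: "Disk \<in> sets lebesgue"
  unfolding Disk_def by simp

lemma G_meas_y[measurable]: "GreenD x \<in> borel_measurable lebesgue"
proof -
  have "GreenD x \<in> borel_measurable borel" unfolding GreenD_def by measurable
  thus ?thesis by (rule borel_to_leb)
qed

lemma log_bound:
  assumes r: "0 < r" "r \<le> 2" and c: "0 \<le> c"
  shows "ennreal (c * ln (4 / r\<^sup>2)) \<le> (\<Sum>j. ennreal (c * ln 4) * indicator {..2 / 2^j} r)"
proof -
  have ex: "\<exists>n. 2 / r < (2::real) ^ n" by (rule real_arch_pow) simp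
  define n where "n = (LEAST n. 2 / r < (2::real) ^ n)"
  have n1: "2 / r < 2 ^ n" unfolding n_def by (rule LeastI_ex[OF ex])
  have "n \<noteq> 0"
  proof
    assume "n = 0" with n1 have "2 / r < 1" by simp
    with r show False by (simp add: divide_less_eq)
  qed
  then obtain k where nk: "n = Suc k" by (cases n) auto
  have k1: "2 ^ k \<le> 2 / r"
  proof (rule ccontr)
    assume "\<not> 2 ^ k \<le> 2 / r"
    hence "2 / r < 2 ^ k" by simp
    hence "n \<le> k" unfolding n_def by (rule Least_le)
    with nk show False by simp
  qed
  have "ln (4 / r\<^sup>2) = ln ((2 / r) ^ 2)" by (simp add: power_divide)
  also have "\<dots> = 2 * ln (2 / r)" using r by (subst ln_realpow) auto
  also have "\<dots> \<le> 2 * ln (2 ^ Suc k)" using n1 nk r by (simp add: less_imp_le)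
  also have "\<dots> = real (Suc k) * ln 4"
  proof -
    have l4: "ln (4::real) = 2 * ln 2" using ln_realpow[of 2 2] by simp
    show ?thesis by (simp only: ln_realpow[of 2, simplified] l4)
  qed
  finally have L: "c * ln (4 / r\<^sup>2) \<le> c * (real (Suc k) * ln 4)" using c by (simp add: mult_left_mono)
  have "(\<Sum>j<Suc k. ennreal (c * ln 4) * indicator {..2 / 2^j} r) = (\<Sum>j<Suc k. ennreal (c * ln 4))"
  proof (rule sum.cong)
    fix j assume "j \<in> {..<Suc k}"
    hence "(2::real) ^ j \<le> 2 ^ k" by (intro power_increasing) auto
    hence "2 ^ j \<le> 2 / r" using k1 by linarith
    hence "r \<le> 2 / 2 ^ j" using r by (simp add: field_simps)
    thus "ennreal (c * ln 4) * indicator {..2 / 2^j} r = ennreal (c * ln 4)" by simp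
  qed simp
  also have "\<dots> = ennreal (c * (real (Suc k) * ln 4))"
    using c by (simp add: ennreal_of_nat_eq_real_of_nat[symmetric] ennreal_mult' mult.commute mult.left_commute)
  moreover have "(\<Sum>j<Suc k. ennreal (c * ln 4) * indicator {..2 / 2^j} r) \<le> (\<Sum>j. ennreal (c * ln 4) * indicator {..2 / 2^j} r)"
    by (rule sum_le_suminf) auto
  ultimately have S: "ennreal (c * (real (Suc k) * ln 4)) \<le> (\<Sum>j. ennreal (c * ln 4) * indicator {..2 / 2^j} r)"
    by simp
  from L have "ennreal (c * ln (4 / r\<^sup>2)) \<le> ennreal (c * (real (Suc k) * ln 4))" by (rule ennreal_leI)
  with S show ?thesis by (rule order_trans[rotated])
qed

lemma cball_sets[measurable]: "cball (x::pt) r \<in> sets lebesgue"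
  using lmeasurable_cball fmeasurableD by blast

lemma emeasure_cball_pt: "0 \<le> \<rho> \<Longrightarrow> emeasure lebesgue (cball (x::pt) \<rho>) = ennreal (pi * \<rho>\<^sup>2)"
  using emeasure_cball[of \<rho> x] by (simp add: unit_ball_vol_2)

lemma G_self[simp]: "GreenD x x = 0" by (simp add: GreenD_def)

lemma G_nn:
  assumes x: "norm x < 1"
  shows "(\<integral>\<^sup>+y. ennreal (indicator Disk y * GreenD x y) \<partial>lebesgue) \<le> ennreal (4 * ln 4 / 3)"
proof -
  define c where "c = 1 / (4 * pi)"
  have c0: "0 \<le> c" by (simp add: c_def)
  have pw: "ennreal (indicator Disk y * GreenD x y) \<le> (\<Sum>j. ennreal (c * ln 4) * indicator (cball x (2 / 2^j)) y)" for y
  proof (cases "y \<in> Disk \<and> y \<noteq> x")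
    case False then show ?thesis by (auto simp: indicator_def)
  next
    case True
    hence y: "norm y < 1" "y \<noteq> x" by (auto simp: Disk_def)
    have r: "0 < norm (x - y)" "norm (x - y) \<le> 2" using y x norm_triangle_ineq4[of x y] by auto
    have "ennreal (indicator Disk y * GreenD x y) = ennreal (GreenD x y)" using True by simp
    also have "\<dots> \<le> ennreal (c * ln (4 / (norm (x - y))\<^sup>2))"
      using G_upper[OF x y(1)] y(2) by (intro ennreal_leI) (auto simp: c_def)
    also have "\<dots> \<le> (\<Sum>j. ennreal (c * ln 4) * indicator {..2 / 2^j} (norm (x - y)))"
      by (rule log_bound[OF r c0])
    also have "\<dots> = (\<Sum>j. ennreal (c * ln 4) * indicator (cball x (2 / 2^j)) y)"
      by (simp add: indicator_def dist_norm)
    finally show ?thesis .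
  qed
  have "(\<integral>\<^sup>+y. ennreal (indicator Disk y * GreenD x y) \<partial>lebesgue)
      \<le> (\<integral>\<^sup>+y. (\<Sum>j. ennreal (c * ln 4) * indicator (cball x (2 / 2^j)) y) \<partial>lebesgue)"
    by (intro nn_integral_mono pw)
  also have "\<dots> = (\<Sum>j. (\<integral>\<^sup>+y. ennreal (c * ln 4) * indicator (cball x (2 / 2^j)) y \<partial>lebesgue))"
    by (rule nn_integral_suminf) simp
  also have "\<dots> = (\<Sum>j. ennreal (ln 4 * (1/4)^j))"
  proof (rule suminf_cong)
    fix j :: nat
    have "(\<integral>\<^sup>+y. ennreal (c * ln 4) * indicator (cball x (2 / 2^j)) y \<partial>lebesgue)
        = ennreal (c * ln 4) * emeasure lebesgue (cball x (2 / 2^j))"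
      by (rule nn_integral_cmult_indicator) simp
    also have "\<dots> = ennreal (c * ln 4) * ennreal (pi * (2 / 2^j)\<^sup>2)"
      by (subst emeasure_cball_pt) auto
    also have "\<dots> = ennreal (ln 4 * (1/4)^j)"
      using c0 by (simp add: ennreal_mult[symmetric] c_def power_divide field_simps power_mult_distrib[symmetric]
           flip: power_mult) (metis mult.commute power_mult num_double numeral_times_numeral power2_eq_square)
    finally show "(\<integral>\<^sup>+y. ennreal (c * ln 4) * indicator (cball x (2 / 2^j)) y \<partial>lebesgue) = ennreal (ln 4 * (1/4)^j)" .
  qed
  also have "\<dots> = ennreal (\<Sum>j. ln 4 * (1/4)^j)"
    by (rule suminf_ennreal2) (auto intro: summable_mult)
  also have "(\<Sum>j. ln 4 * (1/4::real)^j) = 4 * ln 4 / 3"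
    by (simp add: suminf_mult suminf_geometric)
  finally show ?thesis .
qed

lemma G_int:
  assumes x: "norm x < 1"
  shows "integrable lebesgue (\<lambda>y. indicator Disk y * GreenD x y)"
proof (rule integrableI_nonneg)
  show "AE y in lebesgue. 0 \<le> indicator Disk y * GreenD x y"
    using G_nonneg[OF x] by (auto simp: indicator_def Disk_def)
  show "(\<integral>\<^sup>+y. ennreal (indicator Disk y * GreenD x y) \<partial>lebesgue) < \<infinity>"
    using G_nn[OF x] by (simp add: le_less_trans)
qed simp

lemma G_int_bound:
  assumes x: "norm x < 1"
  shows "(\<integral>y. indicator Disk y * GreenD x y \<partial>lebesgue) \<le> 4 * ln 4 / 3"
proof -
  have "(\<integral>y. indicator Disk y * GreenD x y \<partial>lebesgue) = enn2real (\<integral>\<^sup>+y. ennreal (indicator Disk y * GreenD x y) \<partial>lebesgue)"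
  proof (rule integral_eq_nn_integral)
    show "AE y in lebesgue. 0 \<le> indicator Disk y * GreenD x y"
      using G_nonneg[OF x] by (auto simp: indicator_def Disk_def)
  qed simp
  also have "\<dots> \<le> enn2real (ennreal (4 * ln 4 / 3))"
    by (rule enn2real_mono[OF G_nn[OF x]]) simp
  finally show ?thesis by simp
qed



lemma sf_leb: "sigma_finite_measure (lebesgue :: pt measure)"
  unfolding sigma_finite_measure_def
proof (intro exI[of _ "range (\<lambda>n::nat. cball 0 (real n))"] conjI)
  show "\<Union>(range (\<lambda>n::nat. cball (0::pt) (real n))) = space lebesgue"
  proof -
    have "\<exists>n::nat. x \<in> cball 0 (real n)" for x :: pt
      using real_arch_simple[of "norm x"] by auto
    thus ?thesis by auto
  qed
qed (auto simp: emeasure_cball)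

interpretation leb: sigma_finite_measure "lebesgue :: pt measure" by (rule sf_leb)

lemma Inner_meas:
  assumes [measurable]: "u \<in> borel_measurable (lebesgue :: pt measure)"
  shows "(\<lambda>x. \<integral>y. indicator Disk y * (GreenD x y * u x * u y) \<partial>lebesgue) \<in> borel_measurable lebesgue"
proof -
  have [measurable]: "(\<lambda>p. GreenD (fst p) (snd p)) \<in> borel_measurable (lebesgue \<Otimes>\<^sub>M (lebesgue :: pt measure))"
    using G_meas by (simp add: case_prod_beta')
  have [measurable]: "(\<lambda>p. u (fst p)) \<in> borel_measurable (lebesgue \<Otimes>\<^sub>M (lebesgue :: pt measure))"
    by (rule measurable_compose[OF measurable_fst]) simp
  have [measurable]: "(\<lambda>p. u (snd p)) \<in> borel_measurable (lebesgue \<Otimes>\<^sub>M (lebesgue :: pt measure))"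
    by (rule measurable_compose[OF measurable_snd]) simp
  show ?thesis by measurable
qed

lemma Disk_fin: "emeasure lebesgue Disk < \<infinity>"
proof -
  have "emeasure lebesgue Disk \<le> emeasure lebesgue (cball (0::pt) 1)"
    by (rule emeasure_mono) (auto simp: Disk_def)
  also have "\<dots> = ennreal pi" using emeasure_cball_pt[of 1 0] by simp
  finally show ?thesis by (simp add: le_less_trans)
qed

lemma Disk_int[simp]: "integrable lebesgue (\<lambda>x. indicator Disk x * (c::real))"
  using integrable_real_mult_indicator[of Disk lebesgue "\<lambda>_. c"] Disk_fin
  by (simp add: mult.commute integrable_real_indicator)

lemma inner_int:
  assumes um[measurable]: "u \<in> borel_measurable lebesgue"
    and ub: "AE y in lebesgue. y \<in> Disk \<longrightarrow> \<bar>u y\<bar> \<le> M" and M: "0 \<le> M" and x: "norm x < 1"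
  shows "integrable lebesgue (\<lambda>y. indicator Disk y * (GreenD x y * u x * u y))"
    and "\<bar>\<integral>y. indicator Disk y * (GreenD x y * u x * u y) \<partial>lebesgue\<bar> \<le> \<bar>u x\<bar> * M * (4 * ln 4 / 3)"
proof -
  define f where "f y = (\<bar>u x\<bar> * M) * (indicator Disk y * GreenD x y)" for y
  have fi: "integrable lebesgue f" unfolding f_def by (intro integrable_mult_right G_int[OF x])
  have AE: "AE y in lebesgue. norm (indicator Disk y * (GreenD x y * u x * u y)) \<le> f y"
    using ub
  proof eventually_elim
    case (elim y)
    show ?case
    proof (cases "y \<in> Disk")
      case True
      have g: "0 \<le> GreenD x y" using G_nonneg[OF x] True by (simp add: Disk_def)
      have "\<bar>GreenD x y * u x * u y\<bar> = GreenD x y * \<bar>u x\<bar> * \<bar>u y\<bar>" using g by (simp add: abs_mult)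
      also have "\<dots> \<le> GreenD x y * \<bar>u x\<bar> * M" using elim True g by (intro mult_left_mono) auto
      finally show ?thesis using True by (simp add: f_def mult_ac)
    qed (simp add: f_def)
  qed
  have fn: "norm (f y) = f y" for y
    unfolding f_def using G_nonneg[OF x] M by (auto simp: indicator_def Disk_def)
  show i: "integrable lebesgue (\<lambda>y. indicator Disk y * (GreenD x y * u x * u y))"
    by (rule Bochner_Integration.integrable_bound[OF fi]) (use AE fn in auto)
  have "\<bar>\<integral>y. indicator Disk y * (GreenD x y * u x * u y) \<partial>lebesgue\<bar> \<le> (\<integral>y. norm (indicator Disk y * (GreenD x y * u x * u y)) \<partial>lebesgue)"
    using integral_norm_bound[of lebesgue "\<lambda>y. indicator Disk y * (GreenD x y * u x * u y)"] by simp
  also have "\<dots> \<le> integral\<^sup>L lebesgue f"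
    by (rule integral_mono_AE[OF integrable_norm[OF i] fi AE])
  also have "\<dots> = (\<bar>u x\<bar> * M) * (\<integral>y. indicator Disk y * GreenD x y \<partial>lebesgue)"
    unfolding f_def by simp
  also have "\<dots> \<le> (\<bar>u x\<bar> * M) * (4 * ln 4 / 3)"
    using M by (intro mult_left_mono G_int_bound[OF x]) auto
  finally show "\<bar>\<integral>y. indicator Disk y * (GreenD x y * u x * u y) \<partial>lebesgue\<bar> \<le> \<bar>u x\<bar> * M * (4 * ln 4 / 3)" .
qed

lemma outer_int:
  assumes um[measurable]: "u \<in> borel_measurable lebesgue"
    and ub: "AE y in lebesgue. y \<in> Disk \<longrightarrow> \<bar>u y\<bar> \<le> M" and M: "0 \<le> M"
  shows "integrable lebesgue (\<lambda>x. indicator Disk x * (\<integral>y. indicator Disk y * (GreenD x y * u x * u y) \<partial>lebesgue))"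
proof (rule Bochner_Integration.integrable_bound[OF Disk_int[of "M * M * (4 * ln 4 / 3)"]])
  show "(\<lambda>x. indicator Disk x * (\<integral>y. indicator Disk y * (GreenD x y * u x * u y) \<partial>lebesgue)) \<in> borel_measurable lebesgue"
    using Inner_meas[OF um] by measurable
  show "AE x in lebesgue. norm (indicator Disk x * (\<integral>y. indicator Disk y * (GreenD x y * u x * u y) \<partial>lebesgue))
      \<le> norm (indicator Disk x * (M * M * (4 * ln 4 / 3)))"
    using ub
  proof eventually_elim
    case (elim x)
    show ?case
    proof (cases "x \<in> Disk")
      case True
      hence x: "norm x < 1" by (simp add: Disk_def)
      have "\<bar>\<integral>y. indicator Disk y * (GreenD x y * u x * u y) \<partial>lebesgue\<bar> \<le> \<bar>u x\<bar> * M * (4 * ln 4 / 3)"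
        by (rule inner_int(2)[OF um ub M x])
      also have "\<dots> \<le> M * M * (4 * ln 4 / 3)"
        using elim True M by (intro mult_right_mono) (auto intro: mult_right_mono)
      finally show ?thesis using True M by simp
    qed simp
  qed
qed

lemma norm_meas[measurable]: "(\<lambda>x::pt. norm x) \<in> borel_measurable lebesgue"
proof -
  have "(\<lambda>x::pt. norm x) \<in> borel_measurable borel" by measurable
  thus ?thesis by (rule borel_to_leb)
qed

lemma lin_int:
  assumes um[measurable]: "u \<in> borel_measurable lebesgue"
    and ub: "AE y in lebesgue. y \<in> Disk \<longrightarrow> \<bar>u y\<bar> \<le> M"
  shows "integrable lebesgue (\<lambda>x. indicator Disk x * ((norm x)\<^sup>2 * u x))"
proof (rule Bochner_Integration.integrable_bound[OF Disk_int[of M]])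
  show "AE x in lebesgue. norm (indicator Disk x * ((norm x)\<^sup>2 * u x)) \<le> norm (indicator Disk x * M)"
    using ub
  proof eventually_elim
    case (elim x)
    show ?case
    proof (cases "x \<in> Disk")
      case True
      hence x: "(norm x)\<^sup>2 \<le> 1" by (simp add: Disk_def abs_square_le_1)
      have "\<bar>(norm x)\<^sup>2 * u x\<bar> \<le> 1 * M" unfolding abs_mult using elim True x
        by (intro mult_mono) auto
      thus ?thesis using True by simp
    qed simp
  qed
qed measurable



definition Inn :: "(pt \<Rightarrow> real) \<Rightarrow> pt \<Rightarrow> real" where
  "Inn u x = (\<integral>y. indicator Disk y * (GreenD x y * u x * u y) \<partial>lebesgue)"
definition Quad :: "(pt \<Rightarrow> real) \<Rightarrow> real" where
  "Quad u = (\<integral>x. indicator Disk x * Inn u x \<partial>lebesgue)"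
definition Lin :: "(pt \<Rightarrow> real) \<Rightarrow> real" where
  "Lin u = (\<integral>x. indicator Disk x * ((norm x)\<^sup>2 * u x) \<partial>lebesgue)"

lemma Energy_eq: "Energy Om u = 1/2 * Quad u + Om / 2 * Lin u"
  unfolding Energy_def Quad_def Inn_def Lin_def set_lebesgue_integral_def by simp

lemma energy_sum:
  assumes wm[measurable]: "w \<in> borel_measurable lebesgue"
    and wb: "AE y in lebesgue. y \<in> Disk \<longrightarrow> \<bar>w y\<bar> \<le> Mw" and Mw: "0 \<le> Mw"
    and vm[measurable]: "v \<in> borel_measurable lebesgue"
    and vb: "AE y in lebesgue. y \<in> Disk \<longrightarrow> \<bar>v y\<bar> \<le> Mv" and Mv: "0 \<le> Mv"
  shows "Energy Om (\<lambda>x. w x + t * v x) + Energy Om (\<lambda>x. w x - t * v x) = 2 * Energy Om w + t\<^sup>2 * Quad v"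
proof -
  define p where "p x = w x + t * v x" for x
  define m where "m x = w x - t * v x" for x
  define M where "M = Mw + \<bar>t\<bar> * Mv"
  have M: "0 \<le> M" using Mw Mv by (simp add: M_def)
  have pm[measurable]: "p \<in> borel_measurable lebesgue" "m \<in> borel_measurable lebesgue"
    unfolding p_def m_def by simp_all
  have pb: "AE y in lebesgue. y \<in> Disk \<longrightarrow> \<bar>p y\<bar> \<le> M" and mb: "AE y in lebesgue. y \<in> Disk \<longrightarrow> \<bar>m y\<bar> \<le> M"
    using wb vb
    by (eventually_elim, auto simp: p_def m_def M_def abs_mult intro!: order_trans[OF abs_triangle_ineq] 
        order_trans[OF abs_triangle_ineq4] add_mono mult_left_mono)+
  have inner: "Inn p x + Inn m x = 2 * Inn w x + 2 * t\<^sup>2 * Inn v x" if x: "norm x < 1" for x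
  proof -
    note ip = inner_int(1)[OF pm(1) pb M x] and im = inner_int(1)[OF pm(2) mb M x]
      and iw = inner_int(1)[OF wm wb Mw x] and iv = inner_int(1)[OF vm vb Mv x]
    have "Inn p x + Inn m x = (\<integral>y. indicator Disk y * (GreenD x y * p x * p y) + indicator Disk y * (GreenD x y * m x * m y) \<partial>lebesgue)"
      unfolding Inn_def by (rule Bochner_Integration.integral_add[OF ip im, symmetric])
    also have "\<dots> = (\<integral>y. 2 * (indicator Disk y * (GreenD x y * w x * w y)) + (2 * t\<^sup>2) * (indicator Disk y * (GreenD x y * v x * v y)) \<partial>lebesgue)"
      by (rule Bochner_Integration.integral_cong) (simp_all add: p_def m_def algebra_simps power2_eq_square)
    also have "\<dots> = 2 * Inn w x + 2 * t\<^sup>2 * Inn v x"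
      unfolding Inn_def using iw iv by simp
    finally show ?thesis .
  qed
  have ow: "integrable lebesgue (\<lambda>x. indicator Disk x * Inn w x)" unfolding Inn_def by (rule outer_int[OF wm wb Mw])
  have ov: "integrable lebesgue (\<lambda>x. indicator Disk x * Inn v x)" unfolding Inn_def by (rule outer_int[OF vm vb Mv])
  have op: "integrable lebesgue (\<lambda>x. indicator Disk x * Inn p x)" unfolding Inn_def by (rule outer_int[OF pm(1) pb M])
  have om: "integrable lebesgue (\<lambda>x. indicator Disk x * Inn m x)" unfolding Inn_def by (rule outer_int[OF pm(2) mb M])
  have Q: "Quad p + Quad m = 2 * Quad w + 2 * t\<^sup>2 * Quad v"
  proof -
    have "Quad p + Quad m = (\<integral>x. indicator Disk x * Inn p x + indicator Disk x * Inn m x \<partial>lebesgue)"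
      unfolding Quad_def by (rule Bochner_Integration.integral_add[OF op om, symmetric])
    also have "\<dots> = (\<integral>x. 2 * (indicator Disk x * Inn w x) + (2 * t\<^sup>2) * (indicator Disk x * Inn v x) \<partial>lebesgue)"
    proof (rule Bochner_Integration.integral_cong)
      fix x show "indicator Disk x * Inn p x + indicator Disk x * Inn m x = 2 * (indicator Disk x * Inn w x) + (2 * t\<^sup>2) * (indicator Disk x * Inn v x)"
      proof (cases "x \<in> Disk")
        case True
        hence "norm x < 1" by (simp add: Disk_def)
        from inner[OF this] True show ?thesis by (simp add: algebra_simps)
      qed simp
    qed simp
    also have "\<dots> = 2 * Quad w + 2 * t\<^sup>2 * Quad v"
      unfolding Quad_def using ow ov by simp
    finally show ?thesis .
  qed
  have lw: "integrable lebesgue (\<lambda>x. indicator Disk x * ((norm x)\<^sup>2 * w x))" by (rule lin_int[OF wm wb])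
  have lv: "integrable lebesgue (\<lambda>x. indicator Disk x * ((norm x)\<^sup>2 * v x))" by (rule lin_int[OF vm vb])
  have lp: "integrable lebesgue (\<lambda>x. indicator Disk x * ((norm x)\<^sup>2 * p x))" by (rule lin_int[OF pm(1) pb])
  have lm: "integrable lebesgue (\<lambda>x. indicator Disk x * ((norm x)\<^sup>2 * m x))" by (rule lin_int[OF pm(2) mb])
  have L: "Lin p + Lin m = 2 * Lin w"
  proof -
    have "Lin p + Lin m = (\<integral>x. indicator Disk x * ((norm x)\<^sup>2 * p x) + indicator Disk x * ((norm x)\<^sup>2 * m x) \<partial>lebesgue)"
      unfolding Lin_def by (rule Bochner_Integration.integral_add[OF lp lm, symmetric])
    also have "\<dots> = (\<integral>x. 2 * (indicator Disk x * ((norm x)\<^sup>2 * w x)) \<partial>lebesgue)"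
      by (rule Bochner_Integration.integral_cong) (simp_all add: p_def m_def algebra_simps)
    also have "\<dots> = 2 * Lin w" unfolding Lin_def by simp
    finally show ?thesis .
  qed
  have "Energy Om p + Energy Om m = 2 * Energy Om w + t\<^sup>2 * Quad v"
  proof -
    have "Energy Om p + Energy Om m = 1/2 * (Quad p + Quad m) + Om / 2 * (Lin p + Lin m)"
      by (simp add: Energy_eq field_simps)
    also have "\<dots> = 1/2 * (2 * Quad w + 2 * t\<^sup>2 * Quad v) + Om / 2 * (2 * Lin w)" by (simp only: Q L)
    also have "\<dots> = 2 * Energy Om w + t\<^sup>2 * Quad v" by (simp add: Energy_eq algebra_simps)
    finally show ?thesis .
  qed
  thus ?thesis unfolding p_def m_def .
qed



lemma AE_ne: "AE y in lebesgue. y \<noteq> (x::pt)"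
proof -
  have "{x} \<in> null_sets lebesgue"
    using negligible_sing[of x] negligible_iff_null_sets by blast
  thus ?thesis by (rule AE_I'[of "{x}"]) auto
qed

lemma sub_fin: "S \<subseteq> Disk \<Longrightarrow> emeasure lebesgue S < \<infinity>"
  by (meson Disk_fin Disk_sets emeasure_mono le_less_trans)

lemma inn_lower:
  assumes S[measurable]: "S \<in> sets lebesgue" and T[measurable]: "T \<in> sets lebesgue"
    and SD: "S \<subseteq> Disk" and TD: "T \<subseteq> Disk" and x: "x \<in> S" and ST: "S \<inter> T = {}"
    and GL: "\<And>y. y \<in> S \<Longrightarrow> y \<noteq> x \<Longrightarrow> L \<le> GreenD x y"
    and GU: "\<And>y. y \<in> T \<Longrightarrow> GreenD x y \<le> U"
    and a: "0 < \<alpha>" and b: "0 < \<beta>"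
  shows "\<alpha> * (\<alpha> * L * measure lebesgue S - \<beta> * U * measure lebesgue T)
     \<le> Inn (\<lambda>y. \<alpha> * indicator S y - \<beta> * indicator T y) x"
proof -
  define v where "v y = \<alpha> * indicator S y - \<beta> * indicator T y" for y
  have vm[measurable]: "v \<in> borel_measurable lebesgue" unfolding v_def by simp
  have vb: "AE y in lebesgue. y \<in> Disk \<longrightarrow> \<bar>v y\<bar> \<le> \<alpha> + \<beta>"
    using a b by (auto simp: v_def indicator_def)
  have xD: "norm x < 1" using x SD by (auto simp: Disk_def)
  have vx: "v x = \<alpha>" using x ST by (auto simp: v_def indicator_def)
  have iS: "integrable lebesgue (indicator S :: pt \<Rightarrow> real)" using sub_fin[OF SD] by simp
  have iT: "integrable lebesgue (indicator T :: pt \<Rightarrow> real)" using sub_fin[OF TD] by simp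
  define g where "g y = (\<alpha> * \<alpha> * L) * indicator S y - (\<alpha> * \<beta> * U) * indicator T y" for y
  have ig: "integrable lebesgue g" unfolding g_def using iS iT by simp
  have "(\<integral>y. g y \<partial>lebesgue) \<le> (\<integral>y. indicator Disk y * (GreenD x y * v x * v y) \<partial>lebesgue)"
  proof (rule integral_mono_AE[OF ig inner_int(1)[OF vm vb _ xD]])
    show "0 \<le> \<alpha> + \<beta>" using a b by simp
    show "AE y in lebesgue. g y \<le> indicator Disk y * (GreenD x y * v x * v y)"
      using AE_ne[of x]
    proof eventually_elim
      case (elim y)
      show ?case
      proof (cases "y \<in> S")
        case True
        hence "y \<notin> T" "y \<in> Disk" using ST SD by auto
        thus ?thesis using True GL[OF True elim] a vx
          by (simp add: g_def v_def mult_left_mono mult.assoc mult.left_commute)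
      next
        case False
        show ?thesis
        proof (cases "y \<in> T")
          case True
          hence "y \<in> Disk" using TD by auto
          have "\<alpha> * \<beta> * GreenD x y \<le> \<alpha> * \<beta> * U" using GU[OF True] a b by simp
          thus ?thesis using True False vx \<open>y \<in> Disk\<close>
            by (simp add: g_def v_def algebra_simps)
        qed (simp add: g_def v_def False)
      qed
    qed
  qed
  moreover have "(\<integral>y. g y \<partial>lebesgue) = \<alpha> * (\<alpha> * L * measure lebesgue S - \<beta> * U * measure lebesgue T)"
    unfolding g_def using iS iT by (simp add: algebra_simps)
  ultimately show ?thesis unfolding Inn_def v_def by simp
qed

lemma Inn_neg: "Inn (\<lambda>y. - f y) x = Inn f x" unfolding Inn_def by simp
lemma Inn_zero: "f x = 0 \<Longrightarrow> Inn f x = 0" unfolding Inn_def by simp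

lemma quad_pos:
  assumes S1[measurable]: "S1 \<in> sets lebesgue" and S2[measurable]: "S2 \<in> sets lebesgue"
    and D1: "S1 \<subseteq> Disk" and D2: "S2 \<subseteq> Disk"
    and e1: "0 < measure lebesgue S1" and e2: "0 < measure lebesgue S2" and S12: "S1 \<inter> S2 = {}"
    and GL1: "\<And>x y. x \<in> S1 \<Longrightarrow> y \<in> S1 \<Longrightarrow> y \<noteq> x \<Longrightarrow> L \<le> GreenD x y"
    and GL2: "\<And>x y. x \<in> S2 \<Longrightarrow> y \<in> S2 \<Longrightarrow> y \<noteq> x \<Longrightarrow> L \<le> GreenD x y"
    and GU1: "\<And>x y. x \<in> S1 \<Longrightarrow> y \<in> S2 \<Longrightarrow> GreenD x y \<le> U"
    and GU2: "\<And>x y. x \<in> S2 \<Longrightarrow> y \<in> S1 \<Longrightarrow> GreenD x y \<le> U"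
    and UL: "U < L"
  shows "0 < Quad (\<lambda>y. (1 / measure lebesgue S1) * indicator S1 y - (1 / measure lebesgue S2) * indicator S2 y)"
proof -
  define e1 where "e1 = measure lebesgue S1"
  define e2 where "e2 = measure lebesgue S2"
  have e1p: "0 < e1" and e2p: "0 < e2" using e1 e2 by (simp_all add: e1_def e2_def)
  define v where "v y = (1 / e1) * indicator S1 y - (1 / e2) * indicator S2 y" for y
  have vm[measurable]: "v \<in> borel_measurable lebesgue" unfolding v_def by simp
  have vb: "AE y in lebesgue. y \<in> Disk \<longrightarrow> \<bar>v y\<bar> \<le> 1 / e1 + 1 / e2"
  proof (rule AE_I2, rule impI)
    fix y
    have "\<bar>v y\<bar> \<le> \<bar>(1 / e1) * indicator S1 y\<bar> + \<bar>(1 / e2) * indicator S2 y\<bar>"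
      unfolding v_def by (rule abs_triangle_ineq4)
    also have "\<dots> \<le> 1 / e1 + 1 / e2" using e1p e2p
      by (intro add_mono) (auto simp: indicator_def)
    finally show "\<bar>v y\<bar> \<le> 1 / e1 + 1 / e2" .
  qed
  have i1: "integrable lebesgue (indicator S1 :: pt \<Rightarrow> real)" using sub_fin[OF D1] by simp
  have i2: "integrable lebesgue (indicator S2 :: pt \<Rightarrow> real)" using sub_fin[OF D2] by simp
  have in1: "(L - U) / e1 \<le> Inn v x" if x: "x \<in> S1" for x
  proof -
    have "1 / e1 * (1 / e1 * L * e1 - 1 / e2 * U * e2) \<le> Inn v x"
      unfolding v_def e1_def e2_def
      by (rule inn_lower[OF S1 S2 D1 D2 x S12]) (use GL1[OF x] GU1[OF x] e1p e2p in \<open>auto simp: e1_def e2_def\<close>)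
    thus ?thesis using e1p e2p by (simp add: field_simps)
  qed
  have in2: "(L - U) / e2 \<le> Inn v x" if x: "x \<in> S2" for x
  proof -
    have S21: "S2 \<inter> S1 = {}" using S12 by auto
    have "1 / e2 * (1 / e2 * L * e2 - 1 / e1 * U * e1) \<le> Inn (\<lambda>y. 1 / e2 * indicator S2 y - 1 / e1 * indicator S1 y) x"
      unfolding e1_def e2_def
      by (rule inn_lower[OF S2 S1 D2 D1 x S21]) (use GL2[OF x] GU2[OF x] e1p e2p in \<open>auto simp: e1_def e2_def\<close>)
    also have "(\<lambda>y. 1 / e2 * indicator S2 y - 1 / e1 * indicator S1 y) = (\<lambda>y. - v y)"
      by (auto simp: v_def)
    finally show ?thesis using e1p e2p Inn_neg[of v x] by (simp add: field_simps)
  qed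
  define g where "g x = ((L - U) / e1) * indicator S1 x + ((L - U) / e2) * indicator S2 x" for x
  have ig: "integrable lebesgue g" unfolding g_def using i1 i2 by simp
  have "(\<integral>x. g x \<partial>lebesgue) \<le> Quad v"
    unfolding Quad_def
  proof (rule integral_mono_AE[OF ig])
    show "integrable lebesgue (\<lambda>x. indicator Disk x * Inn v x)"
      unfolding Inn_def by (rule outer_int[OF vm vb]) (use e1p e2p in simp)
    show "AE x in lebesgue. g x \<le> indicator Disk x * Inn v x"
    proof (rule AE_I2)
      fix x show "g x \<le> indicator Disk x * Inn v x"
      proof (cases "x \<in> S1")
        case True
        hence "x \<notin> S2" "x \<in> Disk" using S12 D1 by auto
        thus ?thesis using True in1[OF True] by (simp add: g_def)
      next
        case False
        show ?thesis
        proof (cases "x \<in> S2")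
          case True
          hence "x \<in> Disk" using D2 by auto
          thus ?thesis using True False in2[OF True] by (simp add: g_def)
        next
          case False2: False
          have "v x = 0" using False False2 by (simp add: v_def)
          thus ?thesis using False False2 by (simp add: g_def Inn_zero)
        qed
      qed
    qed
  qed
  moreover have "(\<integral>x. g x \<partial>lebesgue) = 2 * (L - U)"
    unfolding g_def using i1 i2 e1p e2p by (simp add: e1_def[symmetric] e2_def[symmetric])
  ultimately have "2 * (L - U) \<le> Quad v" by simp
  thus ?thesis using UL unfolding v_def e1_def e2_def by simp
qed



lemma ball_piece:
  assumes P[measurable]: "P \<in> sets lebesgue" and PB: "P \<subseteq> cball (0::pt) 1"
    and Pn: "P \<notin> null_sets lebesgue" and r: "0 < r"
  shows "\<exists>p. P \<inter> cball p r \<notin> null_sets lebesgue"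
proof (rule ccontr)
  assume "\<not> ?thesis"
  hence all: "\<And>p. P \<inter> cball p r \<in> null_sets lebesgue" by blast
  have "compact (cball (0::pt) 1)" by simp
  then obtain k where k: "finite k" "cball (0::pt) 1 \<subseteq> (\<Union>x\<in>k. ball x r)"
    using r unfolding compact_eq_totally_bounded by blast
  have "P \<subseteq> (\<Union>x\<in>k. P \<inter> cball x r)"
  proof
    fix y assume y: "y \<in> P"
    then obtain x where "x \<in> k" "y \<in> ball x r" using PB k(2) by blast
    thus "y \<in> (\<Union>x\<in>k. P \<inter> cball x r)" using y by (auto intro!: bexI[of _ x] less_imp_le)
  qed
  moreover have "(\<Union>x\<in>k. P \<inter> cball x r) \<in> null_sets lebesgue"
    using k(1) all by (intro null_sets_UN') (auto intro: countable_finite)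
  ultimately have "P \<in> null_sets lebesgue" by (rule null_sets_completion_subset)
  with Pn show False by simp
qed

lemma pos_measure:
  assumes "S \<in> sets lebesgue" "S \<subseteq> Disk" "S \<notin> null_sets lebesgue"
  shows "0 < measure lebesgue S"
proof -
  have "emeasure lebesgue S \<noteq> 0" using assms by (auto simp: null_sets_def)
  moreover have "emeasure lebesgue S = ennreal (measure lebesgue S)"
    using sub_fin[OF assms(2)] by (simp add: emeasure_eq_ennreal_measure)
  ultimately show ?thesis by (simp add: zero_less_measure_iff)
qed

lemma inner_radius:
  assumes W[measurable]: "W \<in> sets lebesgue" and WD: "W \<subseteq> Disk" and Wn: "W \<notin> null_sets lebesgue"
  shows "\<exists>\<rho>. 0 \<le> \<rho> \<and> \<rho> < 1 \<and> W \<inter> cball 0 \<rho> \<notin> null_sets lebesgue"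
proof (rule ccontr)
  assume "\<not> ?thesis"
  hence all: "\<And>n::nat. W \<inter> cball 0 (1 - 1 / real (Suc (Suc n))) \<in> null_sets lebesgue"
    by (auto simp: field_simps)
  have "W \<subseteq> (\<Union>n. W \<inter> cball 0 (1 - 1 / real (Suc (Suc n))))"
  proof
    fix x assume x: "x \<in> W"
    hence "norm x < 1" using WD by (auto simp: Disk_def)
    then obtain n :: nat where n: "n > 0" "inverse (real n) < 1 - norm x"
      using ex_inverse_of_nat_less[of "1 - norm x"] by auto
    have "1 / real (Suc (Suc n)) \<le> inverse (real n)" using n(1) by (simp add: field_simps)
    hence "norm x \<le> 1 - 1 / real (Suc (Suc n))" using n(2) by linarith
    thus "x \<in> (\<Union>n. W \<inter> cball 0 (1 - 1 / real (Suc (Suc n))))" using x by auto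
  qed
  moreover have "(\<Union>n. W \<inter> cball 0 (1 - 1 / real (Suc (Suc n)))) \<in> null_sets lebesgue"
    using all by blast
  ultimately have "W \<in> null_sets lebesgue" by (rule null_sets_completion_subset)
  with Wn show False by simp
qed

lemma GL_help:
  assumes "x \<in> cball p r" "y \<in> cball p r" "norm x \<le> \<rho>" "norm y \<le> \<rho>" "\<rho> < 1" "0 < r" "x \<noteq> (y::pt)"
  shows "(1 / (4 * pi)) * ln ((1 - \<rho>\<^sup>2)\<^sup>2 / (4 * r\<^sup>2)) \<le> GreenD x y"
proof -
  have r0: "0 \<le> \<rho>" using assms(3) norm_ge_zero order_trans by blast
  have r1: "\<rho>\<^sup>2 < 1" using assms r0 by (simp add: abs_square_less_1)
  have "norm (x - y) \<le> dist p x + dist p y"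
    by (metis dist_commute dist_norm dist_triangle)
  also have "\<dots> \<le> 2 * r" using assms(1,2) by simp
  finally have nd: "norm (x - y) \<le> 2 * r" .
  have d: "0 < norm (x - y)" using assms(7) by simp
  have "(norm (x - y))\<^sup>2 \<le> (2 * r)\<^sup>2" using nd d by (intro power_mono) auto
  hence sq: "(norm (x - y))\<^sup>2 \<le> 4 * r\<^sup>2" by (simp add: power_mult_distrib)
  have p: "0 < (1 - \<rho>\<^sup>2)\<^sup>2" using r1 by simp
  have "(1 - \<rho>\<^sup>2)\<^sup>2 / (4 * r\<^sup>2) \<le> (1 - \<rho>\<^sup>2)\<^sup>2 / (norm (x - y))\<^sup>2"
  proof (rule divide_left_mono[OF sq])
    show "0 < 4 * r\<^sup>2 * (norm (x - y))\<^sup>2" using assms(6) d by simp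
  qed (use p in simp)
  hence "ln ((1 - \<rho>\<^sup>2)\<^sup>2 / (4 * r\<^sup>2)) \<le> ln ((1 - \<rho>\<^sup>2)\<^sup>2 / (norm (x - y))\<^sup>2)"
    using p assms(6) by (intro ln_mono) auto
  hence "(1 / (4 * pi)) * ln ((1 - \<rho>\<^sup>2)\<^sup>2 / (4 * r\<^sup>2)) \<le> (1 / (4 * pi)) * ln ((1 - \<rho>\<^sup>2)\<^sup>2 / (norm (x - y))\<^sup>2)"
    by (simp add: divide_right_mono)
  also have "\<dots> \<le> GreenD x y" by (rule G_lower[OF assms(3,4,5,7)])
  finally show ?thesis .
qed

lemma GU_help:
  assumes "x \<in> Disk" "y \<in> Disk" "d < norm (x - y)" "0 < d"
  shows "GreenD x y \<le> (1 / (4 * pi)) * ln (4 / d\<^sup>2)"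
proof -
  have xy: "x \<noteq> y" using assms by auto
  have "GreenD x y \<le> (1 / (4 * pi)) * ln (4 / (norm (x - y))\<^sup>2)"
    using assms xy by (intro G_upper) (auto simp: Disk_def)
  also have "\<dots> \<le> (1 / (4 * pi)) * ln (4 / d\<^sup>2)"
  proof -
    have "d\<^sup>2 \<le> (norm (x - y))\<^sup>2" using assms by (intro power_mono) auto
    moreover have "0 < (norm (x - y))\<^sup>2 * d\<^sup>2" using assms xy by simp
    ultimately have "4 / (norm (x - y))\<^sup>2 \<le> 4 / d\<^sup>2" by (intro divide_left_mono) auto
    hence "ln (4 / (norm (x - y))\<^sup>2) \<le> ln (4 / d\<^sup>2)" using xy by (intro ln_mono) auto
    thus ?thesis by (simp add: divide_right_mono)
  qed
  finally show ?thesis .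
qed

lemma pick:
  assumes W[measurable]: "W \<in> sets lebesgue" and WD: "W \<subseteq> Disk" and Wn: "W \<notin> null_sets lebesgue"
  shows "\<exists>S1 S2 L U. S1 \<in> sets lebesgue \<and> S2 \<in> sets lebesgue \<and> S1 \<subseteq> W \<and> S2 \<subseteq> W
    \<and> S1 \<notin> null_sets lebesgue \<and> S2 \<notin> null_sets lebesgue \<and> S1 \<inter> S2 = {}
    \<and> (\<forall>x\<in>S1. \<forall>y\<in>S1. y \<noteq> x \<longrightarrow> L \<le> GreenD x y)
    \<and> (\<forall>x\<in>S2. \<forall>y\<in>S2. y \<noteq> x \<longrightarrow> L \<le> GreenD x y)
    \<and> (\<forall>x\<in>S1. \<forall>y\<in>S2. GreenD x y \<le> U)
    \<and> (\<forall>x\<in>S2. \<forall>y\<in>S1. GreenD x y \<le> U) \<and> U < L"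
proof -
  obtain \<rho> where \<rho>: "0 \<le> \<rho>" "\<rho> < 1" and W'n: "W \<inter> cball 0 \<rho> \<notin> null_sets lebesgue"
    using inner_radius[OF W WD Wn] by blast
  define W' where "W' = W \<inter> cball 0 \<rho>"
  have W'[measurable]: "W' \<in> sets lebesgue" unfolding W'_def by simp
  have W'D: "W' \<subseteq> Disk" using WD by (auto simp: W'_def)
  have W'B: "W' \<subseteq> cball 0 1" using W'D by (auto simp: Disk_def)
  have W'nn: "W' \<notin> null_sets lebesgue" using W'n by (simp add: W'_def)
  define m where "m = measure lebesgue W'"
  have m: "0 < m" unfolding m_def by (rule pos_measure[OF W' W'D W'nn])
  define d where "d = sqrt (m / (8 * pi))"
  have d: "0 < d" using m by (simp add: d_def)
  have d2: "d\<^sup>2 = m / (8 * pi)" using m by (simp add: d_def)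
  have r1: "\<rho>\<^sup>2 < 1" using \<rho> by (simp add: abs_square_less_1)
  define r where "r = d * (1 - \<rho>\<^sup>2) / 8"
  have r: "0 < r" using d r1 by (simp add: r_def)
  have rd: "r \<le> d" using d \<rho> r1 by (simp add: r_def field_simps)
  obtain p1 where p1: "W' \<inter> cball p1 r \<notin> null_sets lebesgue"
    using ball_piece[OF W' W'B W'nn r] by blast
  define W'' where "W'' = W' - cball p1 (r + d)"
  have W''[measurable]: "W'' \<in> sets lebesgue" unfolding W''_def by simp
  have W''n: "W'' \<notin> null_sets lebesgue"
  proof
    assume N: "W'' \<in> null_sets lebesgue"
    have "ennreal m = emeasure lebesgue W'"
      unfolding m_def using sub_fin[OF W'D] by (simp add: emeasure_eq_ennreal_measure)
    also have "\<dots> \<le> emeasure lebesgue (W'' \<union> cball p1 (r + d))"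
      by (rule emeasure_mono) (auto simp: W''_def)
    also have "\<dots> \<le> emeasure lebesgue W'' + emeasure lebesgue (cball p1 (r + d))"
      by (rule emeasure_subadditive) auto
    also have "\<dots> = ennreal (pi * (r + d)\<^sup>2)"
    proof -
      have e1: "emeasure lebesgue W'' = 0" using N by auto
      have e2: "emeasure lebesgue (cball p1 (r + d)) = ennreal (pi * (r + d)\<^sup>2)"
        by (rule emeasure_cball_pt) (use r d in simp)
      show ?thesis unfolding e1 e2 by simp
    qed
    finally have em: "ennreal m \<le> ennreal (pi * (r + d)\<^sup>2)" .
    have "m \<le> pi * (r + d)\<^sup>2" using ennreal_le_iff[of "pi * (r + d)\<^sup>2" m] em by simp
    also have "\<dots> \<le> pi * (2 * d)\<^sup>2" using r rd d by (intro mult_left_mono power_mono) auto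
    also have "\<dots> = m / 2" using d2 by (simp add: power_mult_distrib)
    finally show False using m by simp
  qed
  have W''B: "W'' \<subseteq> cball 0 1" using W'B by (auto simp: W''_def)
  obtain p2 where p2: "W'' \<inter> cball p2 r \<notin> null_sets lebesgue"
    using ball_piece[OF W'' W''B W''n r] by blast
  define S1 where "S1 = W' \<inter> cball p1 r"
  define S2 where "S2 = W'' \<inter> cball p2 r"
  define L where "L = (1 / (4 * pi)) * ln ((1 - \<rho>\<^sup>2)\<^sup>2 / (4 * r\<^sup>2))"
  define U where "U = (1 / (4 * pi)) * ln (4 / d\<^sup>2)"
  have sep: "d < norm (x - y)" if x: "x \<in> S1" and y: "y \<in> S2" for x y
  proof -
    have "dist p1 x \<le> r" using x by (simp add: S1_def)
    moreover have "r + d < dist p1 y" using y by (simp add: S2_def W''_def)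
    moreover have "dist p1 y \<le> dist p1 x + norm (x - y)"
      by (metis dist_norm dist_triangle)
    ultimately show ?thesis by linarith
  qed
  have S1D: "S1 \<subseteq> Disk" and S2D: "S2 \<subseteq> Disk" using W'D by (auto simp: S1_def S2_def W''_def)
  have S1r: "S1 \<subseteq> cball 0 \<rho>" and S2r: "S2 \<subseteq> cball 0 \<rho>" by (auto simp: S1_def S2_def W''_def W'_def)
  have UL: "U < L"
  proof -
    have q: "0 < (1 - \<rho>\<^sup>2)\<^sup>2" using r1 by simp
    have h4: "4 * r\<^sup>2 = d\<^sup>2 * (1 - \<rho>\<^sup>2)\<^sup>2 / 16" by (simp add: r_def power2_eq_square field_simps)
    have "(1 - \<rho>\<^sup>2)\<^sup>2 / (4 * r\<^sup>2) = (1 - \<rho>\<^sup>2)\<^sup>2 / (d\<^sup>2 * (1 - \<rho>\<^sup>2)\<^sup>2 / 16)" by (simp only: h4)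
    also have "\<dots> = 16 / d\<^sup>2" using q d by (simp add: divide_simps)
    moreover have "ln (4 / d\<^sup>2) < ln (16 / d\<^sup>2)" using d by (simp add: divide_strict_right_mono)
    ultimately show ?thesis by (simp add: L_def U_def divide_strict_right_mono)
  qed
  have a1: "S1 \<in> sets lebesgue" "S2 \<in> sets lebesgue" by (simp_all add: S1_def S2_def)
  have a2: "S1 \<subseteq> W" "S2 \<subseteq> W" by (auto simp: S1_def S2_def W''_def W'_def)
  have a3: "S1 \<notin> null_sets lebesgue" "S2 \<notin> null_sets lebesgue" using p1 p2 by (simp_all add: S1_def S2_def)
  have a4: "S1 \<inter> S2 = {}"
  proof (rule equals0I)
    fix z assume "z \<in> S1 \<inter> S2"
    hence "d < norm (z - z)" using sep by blast
    thus False using d by simp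
  qed
  have a5: "\<forall>x\<in>S1. \<forall>y\<in>S1. y \<noteq> x \<longrightarrow> L \<le> GreenD x y"
  proof (intro ballI impI)
    fix x y assume "x \<in> S1" "y \<in> S1" "y \<noteq> x"
    thus "L \<le> GreenD x y" unfolding L_def using S1r \<rho> r
      by (intro GL_help[of x p1 r y]) (auto simp: S1_def)
  qed
  have a6: "\<forall>x\<in>S2. \<forall>y\<in>S2. y \<noteq> x \<longrightarrow> L \<le> GreenD x y"
  proof (intro ballI impI)
    fix x y assume "x \<in> S2" "y \<in> S2" "y \<noteq> x"
    thus "L \<le> GreenD x y" unfolding L_def using S2r \<rho> r
      by (intro GL_help[of x p2 r y]) (auto simp: S2_def)
  qed
  have a7: "\<forall>x\<in>S1. \<forall>y\<in>S2. GreenD x y \<le> U"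
  proof (intro ballI)
    fix x y assume "x \<in> S1" "y \<in> S2"
    thus "GreenD x y \<le> U" unfolding U_def using S1D S2D d sep by (intro GU_help) auto
  qed
  have a8: "\<forall>x\<in>S2. \<forall>y\<in>S1. GreenD x y \<le> U"
  proof (intro ballI)
    fix x y assume "x \<in> S2" "y \<in> S1"
    thus "GreenD x y \<le> U" unfolding U_def using S1D S2D d sep[of y x]
      by (intro GU_help) (auto simp: norm_minus_commute)
  qed
  show ?thesis using a1 a2 a3 a4 a5 a6 a7 a8 UL by blast
qed



theorem proposition2p4:
  fixes Om lam mu :: real and w :: "pt \<Rightarrow> real" and A B :: "pt set"
  assumes "Om > 0" and "lam > 1 / pi" and "lam \<noteq> 2 * Om"
    and "w \<in> Klam lam" and "\<forall>v \<in> Klam lam. Energy Om v \<le> Energy Om w"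
    and "A = {x \<in> Disk. Gop w x + (Om / 2) * (norm x)\<^sup>2 > mu}"
    and "B = {x \<in> Disk. Gop w x + (Om / 2) * (norm x)\<^sup>2 = mu}"
    and "ereal mu = esssup (restrict_space lebesgue {x \<in> Disk. w x < lam})
                       (\<lambda>x. ereal (Gop w x + (Om / 2) * (norm x)\<^sup>2))"
    and "AE x in lebesgue. x \<in> Disk \<longrightarrow> w x = lam * indicator A x + 2 * Om * indicator B x"
  shows "B \<in> null_sets lebesgue"
proof -
  have wm[measurable]: "w \<in> borel_measurable lebesgue"
    and wbd: "AE x in lebesgue. x \<in> Disk \<longrightarrow> 0 \<le> w x \<and> w x \<le> lam"
    and wsi: "set_integrable lebesgue Disk w" and wint: "(\<integral>x\<in>Disk. w x \<partial>lebesgue) = 1"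
    using assms(4) unfolding Klam_def by auto
  have lam0: "0 < lam" using assms(2) by (smt (verit) divide_pos_pos pi_gt_zero)
  have Om0: "0 < Om" by (rule assms(1))
  define W where "W = {x \<in> Disk. w x = 2 * Om}"
  have Wm[measurable]: "W \<in> sets lebesgue" unfolding W_def by measurable
  have WD: "W \<subseteq> Disk" by (auto simp: W_def)
  have Wnull: "W \<in> null_sets lebesgue"
  proof (cases "lam < 2 * Om")
    case True
    have "AE x in lebesgue. x \<notin> W" using wbd
      by eventually_elim (use True in \<open>auto simp: W_def\<close>)
    thus ?thesis using AE_iff_null_sets[OF Wm] by simp
  next
    case False
    hence lt: "2 * Om < lam" using assms(3) by simp
    show ?thesis
    proof (rule ccontr)
      assume Wn: "W \<notin> null_sets lebesgue"
      obtain S1 S2 L U where S1[measurable]: "S1 \<in> sets lebesgue" and S2[measurable]: "S2 \<in> sets lebesgue"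
        and S1W: "S1 \<subseteq> W" and S2W: "S2 \<subseteq> W"
        and S1n: "S1 \<notin> null_sets lebesgue" and S2n: "S2 \<notin> null_sets lebesgue" and S12: "S1 \<inter> S2 = {}"
        and GL1: "\<forall>x\<in>S1. \<forall>y\<in>S1. y \<noteq> x \<longrightarrow> L \<le> GreenD x y"
        and GL2: "\<forall>x\<in>S2. \<forall>y\<in>S2. y \<noteq> x \<longrightarrow> L \<le> GreenD x y"
        and GU1: "\<forall>x\<in>S1. \<forall>y\<in>S2. GreenD x y \<le> U"
        and GU2: "\<forall>x\<in>S2. \<forall>y\<in>S1. GreenD x y \<le> U" and UL: "U < L"
        using pick[OF Wm WD Wn] by blast
      have S1D: "S1 \<subseteq> Disk" and S2D: "S2 \<subseteq> Disk" using S1W S2W WD by auto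
      define e1 where "e1 = measure lebesgue S1"
      define e2 where "e2 = measure lebesgue S2"
      have e1: "0 < e1" unfolding e1_def by (rule pos_measure[OF S1 S1D S1n])
      have e2: "0 < e2" unfolding e2_def by (rule pos_measure[OF S2 S2D S2n])
      define v where "v y = (1 / e1) * indicator S1 y - (1 / e2) * indicator S2 y" for y
      have vm[measurable]: "v \<in> borel_measurable lebesgue" unfolding v_def by simp
      have Qpos: "0 < Quad v"
        unfolding v_def e1_def e2_def
        by (rule quad_pos[OF S1 S2 S1D S2D _ _ S12, of L U])
           (use GL1 GL2 GU1 GU2 UL e1 e2 in \<open>auto simp: e1_def e2_def\<close>)
      define Mv where "Mv = 1 / e1 + 1 / e2"
      have Mv: "0 < Mv" unfolding Mv_def using e1 e2 by (intro add_pos_pos) simp_all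
      have vbd: "\<bar>v y\<bar> \<le> Mv" for y
      proof -
        have "\<bar>v y\<bar> \<le> \<bar>(1 / e1) * indicator S1 y\<bar> + \<bar>(1 / e2) * indicator S2 y\<bar>"
          unfolding v_def by (rule abs_triangle_ineq4)
        also have "\<dots> \<le> 1 / e1 + 1 / e2" using e1 e2
          by (intro add_mono) (auto simp: indicator_def)
        finally show ?thesis by (simp add: Mv_def)
      qed
      have vsupp: "v y \<noteq> 0 \<Longrightarrow> y \<in> W" for y
      proof (rule ccontr)
        assume "v y \<noteq> 0" "y \<notin> W"
        hence "y \<notin> S1" "y \<notin> S2" using S1W S2W by auto
        hence "v y = 0" by (simp add: v_def)
        with \<open>v y \<noteq> 0\<close> show False by simp
      qed
      have i1: "integrable lebesgue (indicator S1 :: pt \<Rightarrow> real)" using sub_fin[OF S1D] by simp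
      have i2: "integrable lebesgue (indicator S2 :: pt \<Rightarrow> real)" using sub_fin[OF S2D] by simp
      have vi: "integrable lebesgue v" unfolding v_def using i1 i2 by simp
      have vint: "(\<integral>y. v y \<partial>lebesgue) = 0"
      proof -
        have "(\<integral>y. v y \<partial>lebesgue) = (1 / e1) * measure lebesgue S1 - (1 / e2) * measure lebesgue S2"
          unfolding v_def using i1 i2 sub_fin[OF S1D] sub_fin[OF S2D] by simp
        thus ?thesis using e1 e2 by (simp add: e1_def e2_def)
      qed
      have vD: "indicator Disk y * v y = v y" for y
        using S1D S2D by (auto simp: v_def indicator_def)
      define \<delta> where "\<delta> = min (2 * Om) (lam - 2 * Om)"
      have \<delta>: "0 < \<delta>" using Om0 lt by (simp add: \<delta>_def)
      define t where "t = \<delta> / Mv"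
      have t: "0 < t" using \<delta> Mv by (simp add: t_def)
      have inK: "(\<lambda>x. w x + c * v x) \<in> Klam lam" if c: "\<bar>c\<bar> \<le> t" for c
      proof -
        have cv: "\<bar>c * v y\<bar> \<le> \<delta>" for y
        proof -
          have "\<bar>c * v y\<bar> \<le> t * Mv" unfolding abs_mult using c vbd[of y] t
            by (intro mult_mono) auto
          thus ?thesis using Mv by (simp add: t_def)
        qed
        have AEb: "AE x in lebesgue. x \<in> Disk \<longrightarrow> 0 \<le> w x + c * v x \<and> w x + c * v x \<le> lam"
          using wbd
        proof eventually_elim
          case (elim x)
          show ?case
          proof (cases "v x = 0")
            case True thus ?thesis using elim by simp
          next
            case False
            hence "w x = 2 * Om" using vsupp[OF False] by (simp add: W_def)
            moreover have "\<delta> \<le> 2 * Om" "\<delta> \<le> lam - 2 * Om" by (simp_all add: \<delta>_def)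
            ultimately show ?thesis using cv[of x] by (auto simp: abs_le_iff)
          qed
        qed
        have pw: "indicator Disk x *\<^sub>R (w x + c * v x) = indicator Disk x * w x + c * v x" for x
        proof -
          have "indicator Disk x *\<^sub>R (w x + c * v x) = indicator Disk x * w x + c * (indicator Disk x * v x)"
            by (simp add: algebra_simps)
          thus ?thesis by (simp only: vD)
        qed
        have si: "set_integrable lebesgue Disk (\<lambda>x. w x + c * v x)"
        proof -
          have "integrable lebesgue (\<lambda>x. indicator Disk x * w x + c * v x)"
            using wsi vi unfolding set_integrable_def by simp
          moreover have "(\<lambda>x. indicator Disk x * w x + c * v x) = (\<lambda>x. indicator Disk x *\<^sub>R (w x + c * v x))"
            using pw by (simp add: fun_eq_iff)
          ultimately show ?thesis unfolding set_integrable_def by simp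
        qed
        have "(\<integral>x\<in>Disk. (w x + c * v x) \<partial>lebesgue) = (\<integral>x. indicator Disk x * w x + c * v x \<partial>lebesgue)"
          unfolding set_lebesgue_integral_def
          by (rule Bochner_Integration.integral_cong) (simp_all only: pw)
        also have "\<dots> = (\<integral>x\<in>Disk. w x \<partial>lebesgue) + c * (\<integral>y. v y \<partial>lebesgue)"
          using wsi vi unfolding set_integrable_def set_lebesgue_integral_def by simp
        also have "\<dots> = 1" using wint vint by simp
        finally have ii: "(\<integral>x\<in>Disk. (w x + c * v x) \<partial>lebesgue) = 1" .
        show ?thesis unfolding Klam_def using AEb si ii by simp
      qed
      have K1: "(\<lambda>x. w x + t * v x) \<in> Klam lam" using inK[of t] t by simp
      have K2: "(\<lambda>x. w x - t * v x) \<in> Klam lam" using inK[of "- t"] t by simp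
      have E1: "Energy Om (\<lambda>x. w x + t * v x) \<le> Energy Om w" using assms(5) K1 by blast
      have E2: "Energy Om (\<lambda>x. w x - t * v x) \<le> Energy Om w" using assms(5) K2 by blast
      have wb: "AE y in lebesgue. y \<in> Disk \<longrightarrow> \<bar>w y\<bar> \<le> lam" using wbd by eventually_elim auto
      have vb: "AE y in lebesgue. y \<in> Disk \<longrightarrow> \<bar>v y\<bar> \<le> Mv" using vbd by simp
      have "Energy Om (\<lambda>x. w x + t * v x) + Energy Om (\<lambda>x. w x - t * v x) = 2 * Energy Om w + t\<^sup>2 * Quad v"
        by (rule energy_sum[OF wm wb _ vm vb]) (use lam0 Mv in auto)
      with E1 E2 have "t\<^sup>2 * Quad v \<le> 0" by linarith
      moreover have "0 < t\<^sup>2 * Quad v" using t Qpos by simp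
      ultimately show False by simp
    qed
  qed
  obtain N where N: "\<And>x. x \<in> space lebesgue - N \<Longrightarrow> (x \<in> Disk \<longrightarrow> w x = lam * indicator A x + 2 * Om * indicator B x)"
    and Nn: "N \<in> null_sets lebesgue"
    using AE_E3[OF assms(9)] by blast
  have "B \<subseteq> W \<union> N"
  proof
    fix x assume xB: "x \<in> B"
    show "x \<in> W \<union> N"
    proof (cases "x \<in> N")
      case False
      have xD: "x \<in> Disk" using xB assms(7) by simp
      have xA: "x \<notin> A" using xB assms(6) assms(7) by auto
      have "w x = 2 * Om" using N[of x] False xD xA xB by simp
      thus ?thesis using xD by (simp add: W_def)
    qed simp
  qed
  moreover have "W \<union> N \<in> null_sets lebesgue" by (rule null_sets.Un[OF Wnull Nn])
  ultimately show ?thesis by (rule null_sets_completion_subset)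
qed

end
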